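(* Let $\mathcal N':=\mathbb N\cup\{-1\}$ (with $\mathbb N=\{0,1,2,\dots\}$) and let $H=(\mathcal N',\mathcal N',p_1,p_2)$ be the two-player game with, for $k,\ell\ge 0$: $p_1(k,\ell)=\ell+1$ if $k=\ell+1$ and $0$ otherwise; $p_2(k,\ell)=k$ if $k=\ell$ and $0$ otherwise; and, for $k,\ell\ge -1$ and $k_0,\ell_0\ge 0$: $p_1(-1,\ell)=\ell+1$, $p_1(k_0,-1)=k_0$, $p_2(k,-1)=k$, $p_2(-1,\ell_0)=\ell_0$. With the pure belief structure, $\overline{GR}^{\omega}=(\{-1\},\{-1\})$ and $\overline{GR}^{\omega+1}=(\emptyset,\emptyset)$, so the closure ordinal of $\overline{GR}$ is $\omega+1$ and its outcome is $(\emptyset,\emptyset)$. Moreover $\overline{LR}^{\omega}=(\{-1\},\{-1\})$ and this is a fixpoint of $\overline{LR}$, so the outcome of $\overline{LR}$ is $(\{-1\},\{-1\})$.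
   Context: Restrictions of $H$ are pairs $(S_1,S_2)$ with $S_i\subseteq\mathcal N'$, ordered componentwise. Pure belief structure: the beliefs of player $i$ in a restriction $G=(S_1,S_2)$ are the strategies of the opponent in $G$, i.e. $S_{-i}$, and the expected payoff is the payoff. For $G=(S_1,S_2)$ and an opponent strategy $\mu_i$, $s_i\in BR_G(\mu_i)$ iff $p_i(s_i,\mu_i)\ge p_i(s_i',\mu_i)$ for all $s_i'\in S_i$. $GR(G)_i:=\{s_i\in\mathcal N'\mid\exists\mu_i\in S_{-i}: s_i\in BR_H(\mu_i)\}$; $LR(G)_i:=\{s_i\in\mathcal N'\mid\exists\mu_i\in S_{-i}: s_i\in BR_G(\mu_i)\}$; $\overline{T}(G):=T(G)\cap G$. Iterations: $T^0:=H$, $T^{\alpha+1}:=T(T^\alpha)$, $T^\beta:=\bigcap_{\alpha<\beta}T^\alpha$ for limit $\beta$; the closure ordinal is the least $\alpha$ with $T^{\alpha+1}=T^\alpha$ and the outcome is the corresponding iterate. *)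

theory Defs
  imports Main
begin

definition Np :: "int set" where "Np = {k. k \<ge> -1}"

text \<open>Payoffs; arguments are (strategy of player 1, strategy of player 2).\<close>
definition p1 :: "int \<Rightarrow> int \<Rightarrow> int" where
  "p1 k l = (if k = -1 then l + 1 else if l = -1 then k else if k = l + 1 then l + 1 else 0)"

definition p2 :: "int \<Rightarrow> int \<Rightarrow> int" where
  "p2 k l = (if l = -1 then k else if k = -1 then l else if k = l then k else 0)"

type_synonym restr = "int set \<times> int set"

definition H :: restr where "H = (Np, Np)"

text \<open>Best responses in restriction G (pure beliefs): BR_G for players 1 and 2.\<close>
definition BR1 :: "restr \<Rightarrow> int \<Rightarrow> int set" where
  "BR1 G \<mu> = {s \<in> Np. \<forall>s' \<in> fst G. p1 s \<mu> \<ge> p1 s' \<mu>}"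

definition BR2 :: "restr \<Rightarrow> int \<Rightarrow> int set" where
  "BR2 G \<mu> = {s \<in> Np. \<forall>s' \<in> snd G. p2 \<mu> s \<ge> p2 \<mu> s'}"

definition GR :: "restr \<Rightarrow> restr" where
  "GR G = ({s \<in> Np. \<exists>\<mu> \<in> snd G. s \<in> BR1 H \<mu>}, {s \<in> Np. \<exists>\<mu> \<in> fst G. s \<in> BR2 H \<mu>})"

definition LR :: "restr \<Rightarrow> restr" where
  "LR G = ({s \<in> Np. \<exists>\<mu> \<in> snd G. s \<in> BR1 G \<mu>}, {s \<in> Np. \<exists>\<mu> \<in> fst G. s \<in> BR2 G \<mu>})"

definition bar :: "(restr \<Rightarrow> restr) \<Rightarrow> restr \<Rightarrow> restr" where
  "bar T G = (fst (T G) \<inter> fst G, snd (T G) \<inter> snd G)"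

definition iter :: "(restr \<Rightarrow> restr) \<Rightarrow> nat \<Rightarrow> restr" where
  "iter T n = (T ^^ n) H"

definition iter_omega :: "(restr \<Rightarrow> restr) \<Rightarrow> restr" where
  "iter_omega T = ((\<Inter>n. fst (iter T n)), (\<Inter>n. snd (iter T n)))"

end

theory Submission
  imports Defs
begin

definition S :: "nat \<Rightarrow> int set" where "S m = {k. k = -1 \<or> k \<ge> int m}"

lemma Np_S: "Np = S 0" unfolding Np_def S_def by auto
lemma H_S: "H = (S 0, S 0)" unfolding H_def Np_S by simp

lemma BR1_neg: "BR1 (S a, S b) (-1) = {}"
proof -
  { fix s assume s: "s \<in> Np" "\<forall>s'\<in>S a. p1 s' (-1) \<le> p1 s (-1)"
    let ?s = "max (s+2) (int a)"
    have "?s \<in> S a" unfolding S_def by auto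
    with s have "p1 ?s (-1) \<le> p1 s (-1)" by auto
    with s(1) have False unfolding p1_def Np_def by (auto split: if_splits) }
  then show ?thesis unfolding BR1_def by auto
qed

lemma BR1_pos: assumes l: "l \<ge> 0" shows "BR1 (S a, S b) l = {-1, l+1}"
proof -
  have p: "p1 s l = (if s = -1 \<or> s = l + 1 then l + 1 else 0)" for s using l by (simp add: p1_def)
  have m: "-1 \<in> S a" unfolding S_def by simp
  have "(\<forall>s'\<in>S a. p1 s' l \<le> p1 s l) \<longleftrightarrow> s = -1 \<or> s = l + 1" for s
  proof
    assume "\<forall>s'\<in>S a. p1 s' l \<le> p1 s l"
    then have "p1 (-1) l \<le> p1 s l" using m by blast
    then show "s = -1 \<or> s = l + 1" using l unfolding p by (auto split: if_splits)
  next
    assume "s = -1 \<or> s = l + 1"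
    then show "\<forall>s'\<in>S a. p1 s' l \<le> p1 s l" using l unfolding p by auto
  qed
  then show ?thesis unfolding BR1_def using l by (auto simp: Np_def)
qed

lemma BR2_neg: "BR2 (S a, S b) (-1) = {}"
proof -
  { fix s assume s: "s \<in> Np" "\<forall>s'\<in>S b. p2 (-1) s' \<le> p2 (-1) s"
    let ?s = "max (s+2) (int b)"
    have "?s \<in> S b" unfolding S_def by auto
    with s have "p2 (-1) ?s \<le> p2 (-1) s" by auto
    with s(1) have False unfolding p2_def Np_def by (auto split: if_splits) }
  then show ?thesis unfolding BR2_def by auto
qed

lemma BR2_pos: assumes k: "k \<ge> 1" shows "BR2 (S a, S b) k = {-1, k}"
proof -
  have p: "p2 k s = (if s = -1 \<or> s = k then k else 0)" for s using k by (simp add: p2_def)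
  have m: "-1 \<in> S b" unfolding S_def by simp
  have "(\<forall>s'\<in>S b. p2 k s' \<le> p2 k s) \<longleftrightarrow> s = -1 \<or> s = k" for s
  proof
    assume "\<forall>s'\<in>S b. p2 k s' \<le> p2 k s"
    then have "p2 k (-1) \<le> p2 k s" using m by blast
    then show "s = -1 \<or> s = k" using k unfolding p by (auto split: if_splits)
  next
    assume "s = -1 \<or> s = k"
    then show "\<forall>s'\<in>S b. p2 k s' \<le> p2 k s" using k unfolding p by auto
  qed
  then show ?thesis unfolding BR2_def using k by (auto simp: Np_def)
qed

lemma BR2_zero: "BR2 (S a, S b) 0 = Np"
proof -
  have p: "p2 0 s = 0" for s by (simp add: p2_def)
  show ?thesis unfolding BR2_def p by auto
qed

lemma S_mem: "x \<in> S m \<longleftrightarrow> x = -1 \<or> x \<ge> int m" unfolding S_def by simp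

lemma union1: "{s \<in> Np. \<exists>\<mu> \<in> S b. s \<in> BR1 (S a', S b') \<mu>} = S (b+1)"
proof (rule set_eqI, rule iffI)
  fix s assume "s \<in> {s \<in> Np. \<exists>\<mu> \<in> S b. s \<in> BR1 (S a', S b') \<mu>}"
  then obtain \<mu> where m: "\<mu> \<in> S b" "s \<in> BR1 (S a', S b') \<mu>" by blast
  have "\<mu> \<noteq> -1" using m(2) BR1_neg by (metis empty_iff)
  then have g: "\<mu> \<ge> int b" using m(1) S_mem by blast
  then have "s \<in> {-1, \<mu>+1}" using m(2) BR1_pos[of \<mu> a' b'] by simp
  then show "s \<in> S (b+1)" using g S_mem by auto
next
  fix s assume s: "s \<in> S (b+1)"
  show "s \<in> {s \<in> Np. \<exists>\<mu> \<in> S b. s \<in> BR1 (S a', S b') \<mu>}"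
  proof (cases "s = -1")
    case True
    have "int b \<in> S b" using S_mem by simp
    moreover have "s \<in> BR1 (S a', S b') (int b)" using True BR1_pos[of "int b" a' b'] by simp
    moreover have "s \<in> Np" using True by (simp add: Np_def)
    ultimately show ?thesis by blast
  next
    case False
    then have g: "s \<ge> int b + 1" using s S_mem by simp
    then have "s - 1 \<in> S b" using S_mem by simp
    moreover have "s \<in> BR1 (S a', S b') (s-1)" using g BR1_pos[of "s-1" a' b'] by simp
    moreover have "s \<in> Np" using g by (simp add: Np_def)
    ultimately show ?thesis by blast
  qed
qed

lemma union2: "{s \<in> Np. \<exists>\<mu> \<in> S a. s \<in> BR2 (S a', S b') \<mu>} = (if a = 0 then S 0 else S a)"
proof (cases "a = 0")
  case True
  have "0 \<in> S a" using True S_mem by simp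
  then have "{s \<in> Np. \<exists>\<mu> \<in> S a. s \<in> BR2 (S a', S b') \<mu>} = Np"
    using BR2_zero[of a' b'] by blast
  then show ?thesis using True Np_S by simp
next
  case F: False
  show ?thesis
  proof (rule set_eqI, rule iffI)
    fix s assume "s \<in> {s \<in> Np. \<exists>\<mu> \<in> S a. s \<in> BR2 (S a', S b') \<mu>}"
    then obtain \<mu> where m: "\<mu> \<in> S a" "s \<in> BR2 (S a', S b') \<mu>" by blast
    have "\<mu> \<noteq> -1" using m(2) BR2_neg by (metis empty_iff)
    then have g: "\<mu> \<ge> int a" using m(1) S_mem by blast
    then have g1: "\<mu> \<ge> 1" using F by simp
    then have "s \<in> {-1, \<mu>}" using m(2) BR2_pos[of \<mu> a' b'] by simp
    then show "s \<in> (if a = 0 then S 0 else S a)" using F g S_mem by auto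
  next
    fix s assume s: "s \<in> (if a = 0 then S 0 else S a)"
    then have s: "s \<in> S a" using F by simp
    show "s \<in> {s \<in> Np. \<exists>\<mu> \<in> S a. s \<in> BR2 (S a', S b') \<mu>}"
    proof (cases "s = -1")
      case True
      have "int a \<in> S a" using S_mem by simp
      moreover have "s \<in> BR2 (S a', S b') (int a)" using True F BR2_pos[of "int a" a' b'] by simp
      moreover have "s \<in> Np" using True by (simp add: Np_def)
      ultimately show ?thesis by blast
    next
      case False
      then have g: "s \<ge> int a" using s S_mem by simp
      then have g1: "s \<ge> 1" using F by simp
      have "s \<in> BR2 (S a', S b') s" using g1 BR2_pos[of s a' b'] by simp
      moreover have "s \<in> Np" using g1 by (simp add: Np_def)
      ultimately show ?thesis using s by blast
    qed
  qed
qed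

lemma S_inter: "S a \<inter> S b = S (max a b)"
  unfolding S_def by auto

lemma GR_step: "bar GR (S a, S b) = (S (max a (b+1)), S (max a b))"
proof -
  have "GR (S a, S b) = (S (b+1), if a = 0 then S 0 else S a)"
    unfolding GR_def H_S using union1 union2 by simp
  then show ?thesis unfolding bar_def using S_inter
    by (auto simp: max.commute)
qed

lemma LR_step: "bar LR (S a, S b) = (S (max a (b+1)), S (max a b))"
proof -
  have "LR (S a, S b) = (S (b+1), if a = 0 then S 0 else S a)"
    unfolding LR_def using union1 union2 by simp
  then show ?thesis unfolding bar_def using S_inter
    by (auto simp: max.commute)
qed

lemma iter_Suc: "iter T (Suc n) = T (iter T n)"
  unfolding iter_def by simp

lemma iter_GR: "iter (bar GR) n = (S ((n+1) div 2), S (n div 2))"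
proof (induction n)
  case 0 then show ?case unfolding iter_def H_S by simp
next
  case (Suc n)
  have "max ((n+1) div 2) (n div 2 + 1) = (Suc n + 1) div 2"
       "max ((n+1) div 2) (n div 2) = Suc n div 2" by auto
  then show ?case using Suc by (simp add: iter_Suc GR_step)
qed

lemma iter_LR: "iter (bar LR) n = (S ((n+1) div 2), S (n div 2))"
proof (induction n)
  case 0 then show ?case unfolding iter_def H_S by simp
next
  case (Suc n)
  have "max ((n+1) div 2) (n div 2 + 1) = (Suc n + 1) div 2"
       "max ((n+1) div 2) (n div 2) = Suc n div 2" by auto
  then show ?case using Suc by (simp add: iter_Suc LR_step)
qed

lemma Inter_S: "(\<Inter>n. S (f n)) = {-1}" if Hf: "\<And>m. \<exists>n. f n > m" for f :: "nat \<Rightarrow> nat"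
proof (rule set_eqI, rule iffI)
  fix k assume k: "k \<in> (\<Inter>n. S (f n))"
  show "k \<in> {-1}"
  proof (rule ccontr)
    assume "k \<notin> {-1}"
    obtain n where "f n > nat k" using Hf by blast
    moreover have "k \<in> S (f n)" using k by auto
    ultimately show False using \<open>k \<notin> {-1}\<close> unfolding S_def by auto
  qed
qed (auto simp: S_def)

lemma S_inj: "S a = S b \<Longrightarrow> a = b"
proof (rule ccontr)
  assume e: "S a = S b" "a \<noteq> b"
  show False
  proof (cases "a < b")
    case True
    have "int a \<in> S a" unfolding S_def by auto
    then show False using e True unfolding S_def by auto
  next
    case False
    have "int b \<in> S a" using e(1) S_mem by simp
    then show False using e(2) False S_mem by auto
  qed
qed

lemma omega_eq: "iter_omega (bar GR) = ({-1}, {-1})" "iter_omega (bar LR) = ({-1}, {-1})"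
proof -
  have a: "\<And>m::nat. \<exists>n::nat. (n+1) div 2 > m" by (rule_tac x="2*m+2" in exI) auto
  have b: "\<And>m::nat. \<exists>n::nat. n div 2 > m" by (rule_tac x="2*m+2" in exI) auto
  show "iter_omega (bar GR) = ({-1}, {-1})"
    unfolding iter_omega_def iter_GR using Inter_S[OF a] Inter_S[OF b] by simp
  show "iter_omega (bar LR) = ({-1}, {-1})"
    unfolding iter_omega_def iter_LR using Inter_S[OF a] Inter_S[OF b] by simp
qed

lemma GR_single: "bar GR ({-1}, {-1}) = ({}, {})"
proof -
  have "BR1 H (-1) = {}" "BR2 H (-1) = {}" by (simp_all add: H_S BR1_neg BR2_neg)
  then show ?thesis unfolding bar_def GR_def by auto
qed

lemma LR_single: "bar LR ({-1}, {-1}) = ({-1}, {-1})"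
proof -
  have "-1 \<in> BR1 ({-1}, {-1}) (-1)" "-1 \<in> BR2 ({-1}, {-1}) (-1)"
    unfolding BR1_def BR2_def Np_def p1_def p2_def by auto
  then show ?thesis unfolding bar_def LR_def Np_def by auto
qed

theorem mainTheorem13:
  shows "iter_omega (bar GR) = ({-1}, {-1})
       \<and> bar GR (iter_omega (bar GR)) = ({}, {})
       \<and> (\<forall>n. iter (bar GR) (Suc n) \<noteq> iter (bar GR) n)
       \<and> bar GR (iter_omega (bar GR)) \<noteq> iter_omega (bar GR)
       \<and> bar GR (bar GR (iter_omega (bar GR))) = bar GR (iter_omega (bar GR))
       \<and> iter_omega (bar LR) = ({-1}, {-1})
       \<and> bar LR (iter_omega (bar LR)) = iter_omega (bar LR)"
proof -
  have ne: "iter (bar GR) (Suc n) \<noteq> iter (bar GR) n" for n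
  proof
    assume "iter (bar GR) (Suc n) = iter (bar GR) n"
    then have "S ((n+2) div 2) = S ((n+1) div 2)" "S ((n+1) div 2) = S (n div 2)"
      unfolding iter_GR by auto
    then have "(n+2) div 2 = (n+1) div 2" "(n+1) div 2 = n div 2" using S_inj by blast+
    then show False by presburger
  qed
  have e: "bar GR ({}, {}) = ({}, {})" unfolding bar_def by simp
  show ?thesis using omega_eq GR_single LR_single ne e by simp
qed

end
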